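(* Let $r\ge 2$ and $k\ge 2$ be integers. For the hypergraphical clustering game with conflict-free seeking (CF) players on $r$-uniform hypergraphs: (1) if $k\ge r$, then $\left(\frac{k}{k-1}\right)^{r-1}\le PoA(\mathbb{H}_r,k)\le \frac{2k+r-2}{2k-r}$; (2) if $\frac r2<k<r$, then $\frac{k-1}{r}\left(\frac{k}{k-1}\right)^{r-1}\le PoA(\mathbb{H}_r,k)\le \frac{k-1}{r}\cdot\frac{2k+r-2}{2k-r}$; (3) if $k\le \frac r2$, then $PoA(\mathbb{H}_r,k)=\infty$.
   Context: A hypergraph $H=(V,\mathcal{E})$ consists of a finite nonempty set $V$ of vertices (players) and a finite set $\mathcal{E}$ of nonempty subsets of $V$ (hyperedges); we assume $\mathcal{E}\neq\emptyset$. $H$ is $r$-uniform if $|e|=r$ for all $e\in\mathcal{E}$; $\mathbb{H}_r$ denotes the family of $r$-uniform hypergraphs. A $k$-coloring is a map $c:V\to[k]=\{1,\dots,k\}$; $\mathcal{C}(k)$ is the set of all $k$-colorings; for $S\subseteq V$, $c(S)\subseteq[k]$ is the set of colors of vertices of $S$. $\mathcal{E}(v)=\{e\in\mathcal{E}: v\in e\}$. With CF players, the utility of $v$ is $u_v(c)=|\{e\in\mathcal{E}(v): |c(e)|=|c(e\setminus\{v\})|+1\}|$, i.e. the number of hyperedges containing $v$ in which the color of $v$ differs from the colors of all other vertices of the hyperedge. The social welfare is $SW(c)=\sum_{v\in V}u_v(c)$. A coloring $c$ is a (pure) Nash equilibrium if $u_v(c)\ge u_v(c_{-v},i)$ for all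 $v\in V$ and $i\in[k]$, where $(c_{-v},i)$ is $c$ with the color of $v$ replaced by $i$. $O(H,k)=\max_{c\in\mathcal{C}(k)}SW(c)$, $NE(H,k)=\min\{SW(c): c\in\mathcal{C}(k)\text{ a Nash equilibrium}\}$, and $PoA(\mathcal{H},k)=\sup_{H\in\mathcal{H}} O(H,k)/NE(H,k)$, with the convention $x/0=+\infty$ for $x>0$. *)

theory Defs
  imports "HOL-Library.Extended_Real" "HOL-Library.FuncSet" Complex_Main
begin

text \<open>Hypergraphs: vertices are natural numbers (every finite hypergraph is
isomorphic to one on nat). A hypergraph is a pair (V, E).\<close>

definition hypergraph :: "nat set \<Rightarrow> nat set set \<Rightarrow> bool" where
  "hypergraph V E \<longleftrightarrow> finite V \<and> V \<noteq> {} \<and> E \<noteq> {} \<and>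
     (\<forall>e\<in>E. e \<noteq> {} \<and> e \<subseteq> V)"

definition uniform_hypergraphs :: "nat \<Rightarrow> (nat set \<times> nat set set) set" where
  "uniform_hypergraphs r = {(V, E). hypergraph V E \<and> (\<forall>e\<in>E. card e = r)}"

definition colorings :: "nat set \<Rightarrow> nat \<Rightarrow> (nat \<Rightarrow> nat) set" where
  "colorings V k = V \<rightarrow>\<^sub>E {1..k}"

definition util :: "nat set set \<Rightarrow> nat \<Rightarrow> (nat \<Rightarrow> nat) \<Rightarrow> nat" where
  "util E v c = card {e \<in> E. v \<in> e \<and> card (c ` e) = card (c ` (e - {v})) + 1}"

definition SW :: "nat set \<Rightarrow> nat set set \<Rightarrow> (nat \<Rightarrow> nat) \<Rightarrow> nat" where
  "SW V E c = (\<Sum>v\<in>V. util E v c)"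

definition nash_eq :: "nat set \<Rightarrow> nat set set \<Rightarrow> nat \<Rightarrow> (nat \<Rightarrow> nat) \<Rightarrow> bool" where
  "nash_eq V E k c \<longleftrightarrow> c \<in> colorings V k \<and>
     (\<forall>v\<in>V. \<forall>i\<in>{1..k}. util E v (c(v := i)) \<le> util E v c)"

definition OPT :: "nat set \<Rightarrow> nat set set \<Rightarrow> nat \<Rightarrow> nat" where
  "OPT V E k = Max (SW V E ` colorings V k)"

text \<open>Worst Nash equilibrium welfare (as an extended real; the infimum over an
empty set would be +\<infinity>).\<close>
definition NEW :: "nat set \<Rightarrow> nat set set \<Rightarrow> nat \<Rightarrow> ereal" where
  "NEW V E k = (INF c \<in> {c. nash_eq V E k c}. ereal (real (SW V E c)))"

definition ratio :: "nat set \<Rightarrow> nat set set \<Rightarrow> nat \<Rightarrow> ereal" where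
  "ratio V E k = (if NEW V E k = 0 then (if OPT V E k > 0 then \<infinity> else 0)
                  else ereal (real (OPT V E k)) / NEW V E k)"

definition PoA :: "nat \<Rightarrow> nat \<Rightarrow> ereal" where
  "PoA r k = (SUP H \<in> uniform_hypergraphs r. ratio (fst H) (snd H) k)"

end

theory Submission
  imports Defs
begin


lemma uniq_iff:
  assumes "finite e" "v \<in> e"
  shows "(card (c ` e) = card (c ` (e - {v})) + 1) \<longleftrightarrow> c v \<notin> c ` (e - {v})"
proof -
  have "c ` e = insert (c v) (c ` (e - {v}))" using assms(2) by blast
  then show ?thesis using assms(1) by (simp add: card_insert_if)
qed

lemma hyp_fin: "hypergraph V E \<Longrightarrow> e \<in> E \<Longrightarrow> finite e"
  unfolding hypergraph_def using finite_subset by blast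

lemma hyp_finE: "hypergraph V E \<Longrightarrow> finite E"
proof -
  assume "hypergraph V E"
  then have "E \<subseteq> Pow V" "finite V" unfolding hypergraph_def by auto
  then show "finite E" using finite_subset by blast
qed

lemma util_alt:
  assumes "hypergraph V E"
  shows "util E v c = card {e\<in>E. v \<in> e \<and> c v \<notin> c ` (e - {v})}"
proof -
  have "{e \<in> E. v \<in> e \<and> card (c ` e) = card (c ` (e - {v})) + 1} = {e\<in>E. v \<in> e \<and> c v \<notin> c ` (e - {v})}"
  proof (rule Collect_cong)
    fix e
    show "(e \<in> E \<and> v \<in> e \<and> card (c ` e) = card (c ` (e - {v})) + 1) = (e \<in> E \<and> v \<in> e \<and> c v \<notin> c ` (e - {v}))"
      using uniq_iff[OF hyp_fin[OF assms]] by auto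
  qed
  then show ?thesis unfolding util_def by simp
qed

lemma double_count:
  assumes "finite A" "finite B"
  shows "(\<Sum>a\<in>A. card {b\<in>B. P a b}) = (\<Sum>b\<in>B. card {a\<in>A. P a b})"
proof -
  have "(\<Sum>a\<in>A. card {b\<in>B. P a b}) = (\<Sum>a\<in>A. \<Sum>b\<in>B. if P a b then 1 else 0)"
  proof (rule sum.cong[OF refl])
    fix a show "card {b\<in>B. P a b} = (\<Sum>b\<in>B. if P a b then 1 else 0)"
      using sum.inter_filter[OF assms(2), of "\<lambda>_. 1::nat" "P a"] by simp
  qed
  also have "\<dots> = (\<Sum>b\<in>B. \<Sum>a\<in>A. if P a b then 1 else 0)" by (rule sum.swap)
  also have "\<dots> = (\<Sum>b\<in>B. card {a\<in>A. P a b})"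
  proof (rule sum.cong[OF refl])
    fix b show "(\<Sum>a\<in>A. if P a b then 1 else 0) = card {a\<in>A. P a b}"
      using sum.inter_filter[OF assms(1), of "\<lambda>_. 1::nat" "\<lambda>a. P a b"] by simp
  qed
  finally show ?thesis .
qed

definition sE :: "(nat \<Rightarrow> nat) \<Rightarrow> nat set \<Rightarrow> nat" where
  "sE c e = card {v\<in>e. c v \<notin> c ` (e - {v})}"

lemma SW_edges:
  assumes "hypergraph V E"
  shows "SW V E c = (\<Sum>e\<in>E. sE c e)"
proof -
  have fV: "finite V" using assms hypergraph_def by auto
  have "SW V E c = (\<Sum>v\<in>V. card {e\<in>E. v \<in> e \<and> c v \<notin> c ` (e - {v})})"
    unfolding SW_def using util_alt[OF assms] by simp
  also have "\<dots> = (\<Sum>e\<in>E. card {v\<in>V. v \<in> e \<and> c v \<notin> c ` (e - {v})})"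
    by (rule double_count[OF fV hyp_finE[OF assms]])
  also have "\<dots> = (\<Sum>e\<in>E. sE c e)"
  proof (rule sum.cong)
    fix e assume "e \<in> E"
    then have "e \<subseteq> V" using assms hypergraph_def by auto
    then have "{v\<in>V. v \<in> e \<and> c v \<notin> c ` (e - {v})} = {v\<in>e. c v \<notin> c ` (e - {v})}" by blast
    then show "card {v\<in>V. v \<in> e \<and> c v \<notin> c ` (e - {v})} = sE c e" by (simp add: sE_def)
  qed simp
  finally show ?thesis .
qed




lemma col_range: "c \<in> colorings V k \<Longrightarrow> v \<in> V \<Longrightarrow> c v \<in> {1..k}"
  unfolding colorings_def by auto

lemma util_switch:
  assumes "hypergraph V E"
  shows "util E v (c(v:=i)) = card {e\<in>E. v \<in> e \<and> i \<notin> c ` (e - {v})}"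
proof -
  have "\<And>e. (c(v:=i)) ` (e - {v}) = c ` (e - {v})" by auto
  then show ?thesis using util_alt[OF assms, of v "c(v:=i)"] by simp
qed

lemma NE_vertex:
  assumes H: "hypergraph V E" and NE: "nash_eq V E k c" and v: "v \<in> V"
  shows "(\<Sum>e\<in>{e\<in>E. v \<in> e}. k - card (c ` (e - {v}))) \<le> k * util E v c"
proof -
  have fE: "finite E" using hyp_finE[OF H] .
  have cV: "c \<in> colorings V k" and sw: "\<And>i. i \<in> {1..k} \<Longrightarrow> util E v (c(v := i)) \<le> util E v c"
    using NE v unfolding nash_eq_def by auto
  have sub: "\<And>e. e \<in> E \<Longrightarrow> c ` (e - {v}) \<subseteq> {1..k}"
    using H col_range[OF cV] unfolding hypergraph_def by blast
  have "(\<Sum>i\<in>{1..k}. util E v (c(v := i))) \<le> card {1..k} * util E v c"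
    using sum_bounded_above[of "{1..k}" "\<lambda>i. util E v (c(v := i))" "util E v c"] sw by simp
  then have A: "(\<Sum>i\<in>{1..k}. util E v (c(v := i))) \<le> k * util E v c" by simp
  have "(\<Sum>i\<in>{1..k}. util E v (c(v := i))) = (\<Sum>i\<in>{1..k}. card {e\<in>E. v \<in> e \<and> i \<notin> c ` (e - {v})})"
    using util_switch[OF H] by simp
  also have "\<dots> = (\<Sum>e\<in>E. card {i\<in>{1..k}. v \<in> e \<and> i \<notin> c ` (e - {v})})"
    by (rule double_count) (use fE in auto)
  also have "\<dots> = (\<Sum>e\<in>E. if v \<in> e then k - card (c ` (e - {v})) else 0)"
  proof (rule sum.cong[OF refl])
    fix e assume e: "e \<in> E"
    have fe: "finite (c ` (e - {v}))" using hyp_fin[OF H e] by simp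
    have "{i\<in>{1..k}. i \<notin> c ` (e - {v})} = {1..k} - c ` (e - {v})" by blast
    then have "card {i\<in>{1..k}. i \<notin> c ` (e - {v})} = k - card (c ` (e - {v}))"
      using card_Diff_subset[OF fe sub[OF e]] by simp
    then show "card {i\<in>{1..k}. v \<in> e \<and> i \<notin> c ` (e - {v})} = (if v \<in> e then k - card (c ` (e - {v})) else 0)"
      by auto
  qed
  also have "\<dots> = (\<Sum>e\<in>{e\<in>E. v \<in> e}. k - card (c ` (e - {v})))"
    using sum.inter_filter[OF fE, of "\<lambda>e. k - card (c ` (e - {v}))" "\<lambda>e. v \<in> e"] by simp
  finally show ?thesis using A by simp
qed

lemma edge_sum:
  assumes "finite e"
  shows "(\<Sum>v\<in>e. real (card (c ` (e - {v})))) = real (card e) * real (card (c ` e)) - real (sE c e)"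
proof -
  have "(\<Sum>v\<in>e. real (card (c ` (e - {v})))) = (\<Sum>v\<in>e. real (card (c ` e)) - (if c v \<notin> c ` (e - {v}) then 1 else 0))"
  proof (rule sum.cong[OF refl])
    fix v assume v: "v \<in> e"
    show "real (card (c ` (e - {v}))) = real (card (c ` e)) - (if c v \<notin> c ` (e - {v}) then 1 else 0)"
    proof (cases "c v \<notin> c ` (e - {v})")
      case True then show ?thesis using uniq_iff[OF assms v, of c] by simp
    next
      case False
      then have "c ` e = c ` (e - {v})" using v by blast
      then show ?thesis using False by simp
    qed
  qed
  also have "\<dots> = real (card e) * real (card (c ` e)) - (\<Sum>v\<in>e. (if c v \<notin> c ` (e - {v}) then 1 else 0))"
    by (simp add: sum_subtractf)
  also have "(\<Sum>v\<in>e. (if c v \<notin> c ` (e - {v}) then 1 else 0)) = real (sE c e)"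
    using sum.inter_filter[OF assms, of "\<lambda>_. 1::real" "\<lambda>v. c v \<notin> c ` (e - {v})"] unfolding sE_def by simp
  finally show ?thesis .
qed




lemma fiber_two:
  fixes c :: "nat \<Rightarrow> nat"
  assumes fe: "finite e"
  defines "W \<equiv> {v\<in>e. c v \<in> c ` (e - {v})}"
  shows "2 * card (c ` W) \<le> card W"
proof -
  have fW: "finite W" using fe unfolding W_def by simp
  have W: "W = (\<Union>y\<in>c ` W. {w\<in>W. c w = y})" by blast
  have "card W = (\<Sum>y\<in>c ` W. card {w\<in>W. c w = y})"
    by (subst W, rule card_UN_disjoint) (use fW in auto)
  moreover have "(\<Sum>y\<in>c ` W. (2::nat)) \<le> (\<Sum>y\<in>c ` W. card {w\<in>W. c w = y})"
  proof (rule sum_mono)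
    fix y assume "y \<in> c ` W"
    then obtain w where w: "w \<in> W" "c w = y" by blast
    then have "w \<in> e" "c w \<in> c ` (e - {w})" unfolding W_def by auto
    then obtain w' where w'0: "c w = c w'" "w' \<in> e - {w}" by (elim imageE)
    then have w': "w' \<in> e" "w' \<noteq> w" "c w' = c w" by auto
    have "w' \<in> W" unfolding W_def using w' \<open>w \<in> e\<close> by force
    then have "{w, w'} \<subseteq> {w\<in>W. c w = y}" using w w' by auto
    moreover have "finite {w\<in>W. c w = y}" using fW by simp
    ultimately have "card {w, w'} \<le> card {w\<in>W. c w = y}" by (rule card_mono[rotated])
    then show "2 \<le> card {w\<in>W. c w = y}" using w' by simp
  qed
  ultimately show ?thesis by simp
qed

lemma edge_colors:
  assumes fe: "finite e"
  shows "2 * card (c ` e) \<le> card e + sE c e"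
proof -
  define U where "U = {v\<in>e. c v \<notin> c ` (e - {v})}"
  define W where "W = {v\<in>e. c v \<in> c ` (e - {v})}"
  have UW: "e = U \<union> W" "U \<inter> W = {}" unfolding U_def W_def by auto
  have fU: "finite U" "finite W" using fe UW by (metis finite_Un)+
  have ce: "card e = card U + card W" using UW fU card_Un_disjoint by metis
  have "card (c ` e) \<le> card (c ` U) + card (c ` W)"
    using UW(1) card_Un_le image_Un by metis
  also have "\<dots> \<le> card U + card (c ` W)" using card_image_le[OF fU(1)] by simp
  finally have "2 * card (c ` e) \<le> 2 * card U + 2 * card (c ` W)" by simp
  also have "\<dots> \<le> 2 * card U + card W" using fiber_two[OF fe, of c] unfolding W_def by simp
  finally show ?thesis unfolding ce sE_def U_def[symmetric] by simp
qed

lemma sE_bound: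
  assumes fe: "finite e" and sub: "c ` e \<subseteq> {1..k}"
  shows "sE c e \<le> card e \<and> (sE c e + 1 \<le> k \<or> card e \<le> k)"
proof -
  define U where "U = {v\<in>e. c v \<notin> c ` (e - {v})}"
  have Ue: "U \<subseteq> e" unfolding U_def by auto
  have fU: "finite U" using fe Ue finite_subset by blast
  have s: "sE c e = card U" unfolding sE_def U_def ..
  have inj: "inj_on c U"
  proof (rule inj_onI)
    fix u u' assume "u \<in> U" "u' \<in> U" "c u = c u'"
    then show "u = u'" unfolding U_def by blast
  qed
  have cU: "card (c ` U) = card U" using card_image[OF inj] .
  show ?thesis
  proof (cases "U = e")
    case True
    have "card (c ` e) \<le> card {1..k}" using card_mono[OF _ sub] by simp
    then show ?thesis using True cU s by simp
  next
    case False
    then obtain w where w: "w \<in> e" "w \<notin> U" using Ue by blast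
    have "c w \<notin> c ` U"
    proof
      assume "c w \<in> c ` U"
      then obtain u where "c w = c u" "u \<in> U" by (elim imageE)
      then have "w \<noteq> u" "c u \<notin> c ` (e - {u})" using w unfolding U_def by auto
      moreover have "c w \<in> c ` (e - {u})" using w \<open>w \<noteq> u\<close> by blast
      ultimately show False using \<open>c w = c u\<close> by simp
    qed
    then have "card (insert (c w) (c ` U)) = card U + 1" using cU fU by simp
    moreover have "insert (c w) (c ` U) \<subseteq> {1..k}" using sub w Ue by blast
    ultimately have "card U + 1 \<le> k" using card_mono[of "{1..k}" "insert (c w) (c ` U)"] by simp
    then show ?thesis using s card_mono[OF fe Ue] by simp
  qed
qed




lemma NE_SW:
  assumes H: "hypergraph V E" and U: "\<forall>e\<in>E. card e = r" and NE: "nash_eq V E k c"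
  shows "real r * (2 * real k - real r) * real (card E) \<le> (2 * real k + real r - 2) * real (SW V E c)"
proof -
  have fE: "finite E" using hyp_finE[OF H] .
  have fV: "finite V" using H hypergraph_def by auto
  have eV: "\<And>e. e \<in> E \<Longrightarrow> e \<subseteq> V" using H hypergraph_def by auto
  have cV: "c \<in> colorings V k" using NE nash_eq_def by auto
  have sub: "\<And>e v. e \<in> E \<Longrightarrow> c ` (e - {v}) \<subseteq> {1..k}"
    using eV col_range[OF cV] by blast
  have cardle: "\<And>e v. e \<in> E \<Longrightarrow> card (c ` (e - {v})) \<le> k"
    using card_mono[OF _ sub] by fastforce
  define S where "S = SW V E c"
  have S: "S = (\<Sum>e\<in>E. sE c e)" unfolding S_def using SW_edges[OF H] .
  have "(\<Sum>v\<in>V. \<Sum>e\<in>{e\<in>E. v \<in> e}. k - card (c ` (e - {v}))) \<le> (\<Sum>v\<in>V. k * util E v c)"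
    by (rule sum_mono) (rule NE_vertex[OF H NE])
  also have "\<dots> = k * S" unfolding S_def SW_def by (simp add: sum_distrib_left)
  finally have A: "(\<Sum>v\<in>V. \<Sum>e\<in>{e\<in>E. v \<in> e}. k - card (c ` (e - {v}))) \<le> k * S" .
  have "(\<Sum>v\<in>V. \<Sum>e\<in>{e\<in>E. v \<in> e}. k - card (c ` (e - {v})))
     = (\<Sum>e\<in>E. \<Sum>v\<in>{v\<in>V. v \<in> e}. k - card (c ` (e - {v})))"
    by (rule sum.swap_restrict[OF fV fE])
  also have "\<dots> = (\<Sum>e\<in>E. \<Sum>v\<in>e. k - card (c ` (e - {v})))"
  proof (rule sum.cong[OF refl])
    fix e assume "e \<in> E"
    then have "{v\<in>V. v \<in> e} = e" using eV by blast
    then show "(\<Sum>v\<in>{v\<in>V. v \<in> e}. k - card (c ` (e - {v}))) = (\<Sum>v\<in>e. k - card (c ` (e - {v})))" by simp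
  qed
  finally have B: "(\<Sum>e\<in>E. \<Sum>v\<in>e. k - card (c ` (e - {v}))) \<le> k * S" using A by simp
  have T: "real (\<Sum>v\<in>e. k - card (c ` (e - {v}))) = real r * real k - real r * real (card (c ` e)) + real (sE c e)"
    if e: "e \<in> E" for e
  proof -
    have fe: "finite e" using hyp_fin[OF H e] .
    have "real (\<Sum>v\<in>e. k - card (c ` (e - {v}))) = (\<Sum>v\<in>e. real k - real (card (c ` (e - {v}))))"
      using cardle[OF e] by (simp add: of_nat_diff)
    also have "\<dots> = real (card e) * real k - (\<Sum>v\<in>e. real (card (c ` (e - {v}))))"
      by (simp add: sum_subtractf)
    also have "\<dots> = real r * real k - real r * real (card (c ` e)) + real (sE c e)"
      using edge_sum[OF fe, of c] U e by simp
    finally show ?thesis .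
  qed
  have T2: "2 * real (\<Sum>v\<in>e. k - card (c ` (e - {v}))) \<ge> 2 * real r * real k - real r * real r - real r * real (sE c e) + 2 * real (sE c e)"
    if e: "e \<in> E" for e
  proof -
    have "2 * real (card (c ` e)) \<le> real r + real (sE c e)"
      using edge_colors[OF hyp_fin[OF H e], of c] U e by (simp flip: of_nat_add of_nat_mult)
    then have "real r * (2 * real (card (c ` e))) \<le> real r * (real r + real (sE c e))"
      by (rule mult_left_mono) simp
    then show ?thesis using T[OF e] by (simp add: algebra_simps)
  qed
  have "(\<Sum>e\<in>E. 2 * real r * real k - real r * real r - real r * real (sE c e) + 2 * real (sE c e))
        \<le> (\<Sum>e\<in>E. 2 * real (\<Sum>v\<in>e. k - card (c ` (e - {v}))))"
    by (rule sum_mono) (rule T2)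
  also have "\<dots> = 2 * real (\<Sum>e\<in>E. \<Sum>v\<in>e. k - card (c ` (e - {v})))"
    by (simp add: sum_distrib_left)
  also have "\<dots> \<le> 2 * (real k * real S)"
  proof -
    have "real (\<Sum>e\<in>E. \<Sum>v\<in>e. k - card (c ` (e - {v}))) \<le> real (k * S)" using B of_nat_le_iff by blast
    then show ?thesis by simp
  qed
  finally have C: "(\<Sum>e\<in>E. 2 * real r * real k - real r * real r - real r * real (sE c e) + 2 * real (sE c e)) \<le> 2 * (real k * real S)" .
  have "(\<Sum>e\<in>E. 2 * real r * real k - real r * real r - real r * real (sE c e) + 2 * real (sE c e))
      = real (card E) * (2 * real r * real k - real r * real r) - real r * real S + 2 * real S"
    unfolding S by (simp add: sum.distrib sum_subtractf sum_distrib_left)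
  with C show ?thesis unfolding S_def[symmetric] by (simp add: algebra_simps)
qed




lemma colorings_fin: "finite V \<Longrightarrow> finite (colorings V k)"
  unfolding colorings_def by (simp add: finite_PiE)

lemma colorings_ne: "k \<ge> 1 \<Longrightarrow> colorings V k \<noteq> {}"
proof -
  assume "k \<ge> 1"
  then have "restrict (\<lambda>_. 1) V \<in> colorings V k" unfolding colorings_def by auto
  then show ?thesis by blast
qed

lemma SW_upper:
  assumes H: "hypergraph V E" and U: "\<forall>e\<in>E. card e = r" and cV: "c \<in> colorings V k"
  shows "SW V E c \<le> card E * (if r \<le> k then r else k - 1)"
proof -
  have "(\<Sum>e\<in>E. sE c e) \<le> card E * (if r \<le> k then r else k - 1)"
  proof -
    have "\<And>e. e \<in> E \<Longrightarrow> sE c e \<le> (if r \<le> k then r else k - 1)"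
    proof -
      fix e assume e: "e \<in> E"
      have "c ` e \<subseteq> {1..k}" using H e col_range[OF cV] unfolding hypergraph_def by blast
      then have "sE c e \<le> card e \<and> (sE c e + 1 \<le> k \<or> card e \<le> k)"
        using sE_bound[OF hyp_fin[OF H e]] by blast
      then show "sE c e \<le> (if r \<le> k then r else k - 1)" using U e by auto
    qed
    then show ?thesis using sum_bounded_above[of E "sE c"] by simp
  qed
  then show ?thesis using SW_edges[OF H] by simp
qed

lemma OPT_upper:
  assumes H: "hypergraph V E" and U: "\<forall>e\<in>E. card e = r" and k: "k \<ge> 1"
  shows "OPT V E k \<le> card E * (if r \<le> k then r else k - 1)"
proof -
  have fV: "finite V" using H hypergraph_def by auto
  show ?thesis unfolding OPT_def
    using colorings_fin[OF fV] colorings_ne[OF k] SW_upper[OF H U] by (simp add: Max_le_iff)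
qed

lemma ratio_upper:
  assumes H: "hypergraph V E" and U: "\<forall>e\<in>E. card e = r" and k: "k \<ge> 1" and r: "r \<ge> 1"
    and kr: "real r < 2 * real k"
  shows "ratio V E k \<le> ereal (real (if r \<le> k then r else k - 1) * (2 * real k + real r - 2) / (real r * (2 * real k - real r)))"
proof -
  define M where "M = (if r \<le> k then r else k - 1)"
  define m where "m = card E"
  have m: "m \<ge> 1" using H hyp_finE[OF H] unfolding m_def hypergraph_def
    by (simp add: Suc_leI card_gt_0_iff)
  define L where "L = real r * (2 * real k - real r) * real m / (2 * real k + real r - 2)"
  have den: "2 * real k + real r - 2 > 0" using k r by simp
  have Lpos: "L > 0" unfolding L_def using kr r m den by simp
  have NEL: "ereal L \<le> NEW V E k"
    unfolding NEW_def
  proof (rule INF_greatest)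
    fix c assume "c \<in> {c. nash_eq V E k c}"
    then have "real r * (2 * real k - real r) * real m \<le> (2 * real k + real r - 2) * real (SW V E c)"
      using NE_SW[OF H U] m_def by auto
    then have "L \<le> real (SW V E c)" unfolding L_def using den by (simp add: field_simps)
    then show "ereal L \<le> ereal (real (SW V E c))" by simp
  qed
  have OP: "real (OPT V E k) \<le> real m * real M"
    using OPT_upper[OF H U k] unfolding m_def M_def by (metis of_nat_le_iff of_nat_mult)
  define B where "B = real M * (2 * real k + real r - 2) / (real r * (2 * real k - real r))"
  have BL: "B = real m * real M / L" 
  proof -
    have "real m \<noteq> 0" using m by simp
    moreover have "2 * real k - real r \<noteq> 0" using kr by simp
    moreover have "real r \<noteq> 0" using r by simp
    ultimately show ?thesis unfolding B_def L_def using den by (simp add: divide_simps)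
  qed
  have B0: "B \<ge> 0" unfolding BL using Lpos by simp
  have NE0: "NEW V E k \<noteq> 0" using NEL Lpos by (metis ereal_less_eq(3) leD zero_ereal_def)
  have "ereal (real (OPT V E k)) / NEW V E k \<le> ereal B"
  proof (cases "NEW V E k")
    case (real y)
    then have yL: "L \<le> y" using NEL by simp
    then have y0: "y > 0" using Lpos by simp
    have "real (OPT V E k) / y \<le> real m * real M / y" using OP y0 by (simp add: divide_right_mono)
    also have "\<dots> \<le> real m * real M / L" using yL Lpos by (simp add: frac_le)
    finally show ?thesis using real y0 BL by simp
  next
    case PInf then show ?thesis using B0 by simp
  next
    case MInf then show ?thesis using NEL by simp
  qed
  then show ?thesis unfolding ratio_def using NE0 B_def M_def by simp
qed




definition FF :: "nat \<Rightarrow> nat \<Rightarrow> (nat \<Rightarrow> nat) set" where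
  "FF r k = PiE {..<r} (\<lambda>_. {..<k})"
definition ed :: "nat \<Rightarrow> nat \<Rightarrow> (nat \<Rightarrow> nat) \<Rightarrow> nat set" where
  "ed r k f = (\<lambda>i. i * k + f i) ` {..<r}"
definition EG :: "nat \<Rightarrow> nat \<Rightarrow> nat set set" where
  "EG r k = ed r k ` FF r k"
definition VG :: "nat \<Rightarrow> nat \<Rightarrow> nat set" where
  "VG r k = {..<r * k}"

lemma divk: "b < (k::nat) \<Longrightarrow> (i * k + b) div k = i"
  by simp
lemma modk: "b < (k::nat) \<Longrightarrow> (i * k + b) mod k = b"
  by simp

lemma mem_ed:
  assumes f: "f \<in> FF r k"
  shows "v \<in> ed r k f \<longleftrightarrow> v div k < r \<and> f (v div k) = v mod k"
proof
  assume "v \<in> ed r k f"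
  then obtain i where i: "i < r" "v = i * k + f i" unfolding ed_def by auto
  have "f i < k" using f i unfolding FF_def by auto
  then show "v div k < r \<and> f (v div k) = v mod k" using i by simp
next
  assume h: "v div k < r \<and> f (v div k) = v mod k"
  have "v = (v div k) * k + f (v div k)" using h by simp
  then show "v \<in> ed r k f" unfolding ed_def using h by blast
qed

lemma ed_sub: "f \<in> FF r k \<Longrightarrow> ed r k f \<subseteq> VG r k"
proof
  fix v assume f: "f \<in> FF r k" and "v \<in> ed r k f"
  then obtain i where i: "i < r" "v = i * k + f i" unfolding ed_def by auto
  have "f i < k" using f i unfolding FF_def by auto
  then have "v < (i + 1) * k" using i by simp
  also have "\<dots> \<le> r * k" using i by (intro mult_right_mono) auto
  finally show "v \<in> VG r k" unfolding VG_def by simp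
qed

lemma ed_inj_pos: "f \<in> FF r k \<Longrightarrow> inj_on (\<lambda>i. i * k + f i) {..<r}"
proof (rule inj_onI)
  fix i j assume f: "f \<in> FF r k" and ij: "i \<in> {..<r}" "j \<in> {..<r}" "i * k + f i = j * k + f j"
  have "f i < k" "f j < k" using f ij unfolding FF_def by auto
  then have "(i * k + f i) div k = (j * k + f j) div k" using ij(3) by simp
  then show "i = j" using \<open>f i < k\<close> \<open>f j < k\<close> by simp
qed

lemma card_ed: "f \<in> FF r k \<Longrightarrow> card (ed r k f) = r"
proof -
  assume f: "f \<in> FF r k"
  have "card ((\<lambda>i. i * k + f i) ` {..<r}) = card {..<r}" by (rule card_image[OF ed_inj_pos[OF f]])
  then show ?thesis unfolding ed_def by simp
qed

lemma inj_ed: "inj_on (ed r k) (FF r k)"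
proof (rule inj_onI)
  fix f g assume f: "f \<in> FF r k" and g: "g \<in> FF r k" and eq: "ed r k f = ed r k g"
  show "f = g"
  proof (rule PiE_ext[OF f[unfolded FF_def] g[unfolded FF_def]])
    fix i assume i: "i \<in> {..<r}"
    have fi: "f i < k" using f i unfolding FF_def by auto
    have "i * k + f i \<in> ed r k f" unfolding ed_def using i by (rule imageI)
    then have "i * k + f i \<in> ed r k g" using eq by simp
    then have "g ((i * k + f i) div k) = (i * k + f i) mod k" using mem_ed[OF g] by blast
    then show "f i = g i" using fi by simp
  qed
qed

lemma FF_ne: "k \<ge> 1 \<Longrightarrow> FF r k \<noteq> {}"
proof -
  assume "k \<ge> 1"
  then have "restrict (\<lambda>_. 0) {..<r} \<in> FF r k" unfolding FF_def by auto
  then show ?thesis by blast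
qed

lemma G_hyp:
  assumes "r \<ge> 1" "k \<ge> 1"
  shows "(VG r k, EG r k) \<in> uniform_hypergraphs r"
proof -
  have "VG r k \<noteq> {}" unfolding VG_def using assms by (simp add: lessThan_empty_iff)
  moreover have "EG r k \<noteq> {}" unfolding EG_def using FF_ne[OF assms(2)] by simp
  moreover have "\<forall>e\<in>EG r k. e \<noteq> {} \<and> e \<subseteq> VG r k \<and> card e = r"
  proof
    fix e assume "e \<in> EG r k"
    then obtain f where f: "f \<in> FF r k" "e = ed r k f" unfolding EG_def by blast
    have "card e = r" using card_ed[OF f(1)] f(2) by simp
    moreover then have "e \<noteq> {}" using assms(1) by auto
    ultimately show "e \<noteq> {} \<and> e \<subseteq> VG r k \<and> card e = r" using ed_sub[OF f(1)] f(2) by simp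
  qed
  ultimately show ?thesis unfolding uniform_hypergraphs_def hypergraph_def VG_def by auto
qed




lemma util_G:
  assumes r: "r \<ge> 1" and k: "k \<ge> 1" and v: "v \<in> VG r k"
  shows "util (EG r k) v c = card {f\<in>FF r k. f (v div k) = v mod k \<and>
            (\<forall>j<r. j \<noteq> v div k \<longrightarrow> c (j * k + f j) \<noteq> c v)}"
proof -
  have H: "hypergraph (VG r k) (EG r k)" using G_hyp[OF r k] unfolding uniform_hypergraphs_def by auto
  define i where "i = v div k"
  have i: "i < r" using v unfolding VG_def i_def by (simp add: less_mult_imp_div_less)
  define P where "P = (\<lambda>e. v \<in> e \<and> c v \<notin> c ` (e - {v}))"
  have "{e\<in>EG r k. P e} = ed r k ` {f\<in>FF r k. P (ed r k f)}" unfolding EG_def by blast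
  moreover have "card (ed r k ` {f\<in>FF r k. P (ed r k f)}) = card {f\<in>FF r k. P (ed r k f)}"
    by (rule card_image) (rule inj_on_subset[OF inj_ed], blast)
  ultimately have "util (EG r k) v c = card {f\<in>FF r k. P (ed r k f)}"
    using util_alt[OF H] unfolding P_def by simp
  also have "{f\<in>FF r k. P (ed r k f)} = {f\<in>FF r k. f i = v mod k \<and>
            (\<forall>j<r. j \<noteq> i \<longrightarrow> c (j * k + f j) \<noteq> c v)}"
  proof (rule Collect_cong)
    fix f
    show "(f \<in> FF r k \<and> P (ed r k f)) = (f \<in> FF r k \<and> f i = v mod k \<and> (\<forall>j<r. j \<noteq> i \<longrightarrow> c (j * k + f j) \<noteq> c v))"
    proof (cases "f \<in> FF r k")
      case f: True
      show ?thesis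
      proof (cases "f i = v mod k")
        case fi: True
        have vv: "v = i * k + f i" using fi i_def by simp
        have ve: "v \<in> ed r k f" using mem_ed[OF f] i fi i_def by simp
        have "ed r k f - {v} = (\<lambda>j. j * k + f j) ` ({..<r} - {i})"
        proof -
          have "(\<lambda>j. j * k + f j) ` ({..<r} - {i}) = (\<lambda>j. j * k + f j) ` {..<r} - (\<lambda>j. j * k + f j) ` {i}"
            by (rule inj_on_image_set_diff[OF ed_inj_pos[OF f]]) (use i in auto)
          then show ?thesis unfolding ed_def vv by simp
        qed
        then have "c ` (ed r k f - {v}) = (\<lambda>j. c (j * k + f j)) ` ({..<r} - {i})" by (simp add: image_image)
        moreover have "c v \<in> (\<lambda>j. c (j * k + f j)) ` ({..<r} - {i}) \<longleftrightarrow> (\<exists>j\<in>{..<r} - {i}. c v = c (j * k + f j))"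
          by (rule image_iff)
        moreover have "(\<exists>j\<in>{..<r} - {i}. c v = c (j * k + f j)) \<longleftrightarrow> \<not> (\<forall>j<r. j \<noteq> i \<longrightarrow> c (j * k + f j) \<noteq> c v)"
          by (metis Diff_iff lessThan_iff singletonD singletonI)
        ultimately have "P (ed r k f) \<longleftrightarrow> (\<forall>j<r. j \<noteq> i \<longrightarrow> c (j * k + f j) \<noteq> c v)"
          unfolding P_def using ve by (simp only:) blast
        then show ?thesis using f fi by simp
      next
        case False
        then have "v \<notin> ed r k f" using mem_ed[OF f] i_def by simp
        then show ?thesis unfolding P_def using False by simp
      qed
    next
      case False
      then show ?thesis by simp
    qed
  qed
  finally show ?thesis unfolding i_def .
qed




lemma card_PiE_pt:
  assumes "i < r" "finite B"
  shows "card (PiE {..<r} (\<lambda>j. if j = i then {a} else B)) = card B ^ (r - 1)"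
proof -
  have "card (PiE {..<r} (\<lambda>j. if j = i then {a} else B)) = (\<Prod>j\<in>{..<r}. card (if j = i then {a} else B))"
    by (rule card_PiE) simp
  also have "\<dots> = card (if i = i then {a} else B) * (\<Prod>j\<in>{..<r} - {i}. card (if j = i then {a} else B))"
    by (rule prod.remove) (use assms in auto)
  also have "(\<Prod>j\<in>{..<r} - {i}. card (if j = i then {a} else B)) = (\<Prod>j\<in>{..<r} - {i}. card B)"
    by (rule prod.cong) auto
  also have "\<dots> = card B ^ (r - 1)" using assms by simp
  finally show ?thesis by simp
qed

definition cN :: "nat \<Rightarrow> nat \<Rightarrow> nat \<Rightarrow> nat" where
  "cN r k = restrict (\<lambda>v. v mod k + 1) (VG r k)"
definition cO :: "nat \<Rightarrow> nat \<Rightarrow> nat \<Rightarrow> nat" where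
  "cO r k = restrict (\<lambda>v. min (v div k + 1) k) (VG r k)"

lemma pos_VG: "f \<in> FF r k \<Longrightarrow> j < r \<Longrightarrow> j * k + f j \<in> VG r k"
  using ed_sub[of f r k] unfolding ed_def by blast

lemma FF_lt: "f \<in> FF r k \<Longrightarrow> j < r \<Longrightarrow> f j < k"
  unfolding FF_def by auto

lemma utilN:
  assumes r: "r \<ge> 1" and k: "k \<ge> 1" and v: "v \<in> VG r k" and b: "b \<in> {1..k}"
  shows "util (EG r k) v ((cN r k)(v := b)) = (k - 1) ^ (r - 1)"
proof -
  define i where "i = v div k"
  define a where "a = v mod k"
  have i: "i < r" using v unfolding VG_def i_def by (simp add: less_mult_imp_div_less)
  have a: "a < k" using k unfolding a_def by simp
  let ?c = "(cN r k)(v := b)"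
  have val: "?c (j * k + f j) = f j + 1" if f: "f \<in> FF r k" and j: "j < r" "j \<noteq> i" for f j
  proof -
    have fj: "f j < k" using FF_lt[OF f j(1)] .
    have "(j * k + f j) div k = j" using fj by simp
    then have "j * k + f j \<noteq> v" using j(2) i_def by auto
    then show ?thesis unfolding cN_def using pos_VG[OF f j(1)] fj by simp
  qed
  have "{f\<in>FF r k. f i = a \<and> (\<forall>j<r. j \<noteq> i \<longrightarrow> ?c (j * k + f j) \<noteq> ?c v)}
       = PiE {..<r} (\<lambda>j. if j = i then {a} else {..<k} - {b - 1})"
  proof (rule set_eqI)
    fix f
    show "f \<in> {f\<in>FF r k. f i = a \<and> (\<forall>j<r. j \<noteq> i \<longrightarrow> ?c (j * k + f j) \<noteq> ?c v)} \<longleftrightarrow>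
          f \<in> PiE {..<r} (\<lambda>j. if j = i then {a} else {..<k} - {b - 1})"
    proof
      assume h: "f \<in> {f\<in>FF r k. f i = a \<and> (\<forall>j<r. j \<noteq> i \<longrightarrow> ?c (j * k + f j) \<noteq> ?c v)}"
      then have f: "f \<in> FF r k" and fi: "f i = a" and fo: "\<And>j. j < r \<Longrightarrow> j \<noteq> i \<Longrightarrow> f j + 1 \<noteq> b"
        using val by auto
      have ext: "f \<in> extensional {..<r}" using f unfolding FF_def by (simp add: PiE_def)
      show "f \<in> PiE {..<r} (\<lambda>j. if j = i then {a} else {..<k} - {b - 1})"
      proof (rule PiE_I)
        fix j assume "j \<in> {..<r}"
        then show "f j \<in> (if j = i then {a} else {..<k} - {b - 1})"
          using fi fo[of j] FF_lt[OF f, of j] b by auto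
      next
        fix j assume "j \<notin> {..<r}"
        then show "f j = undefined" using ext by (simp add: extensional_def)
      qed
    next
      assume h: "f \<in> PiE {..<r} (\<lambda>j. if j = i then {a} else {..<k} - {b - 1})"
      have f: "f \<in> FF r k" unfolding FF_def
      proof (rule PiE_I)
        fix j assume j: "j \<in> {..<r}"
        show "f j \<in> {..<k}" using PiE_mem[OF h j] a by (auto split: if_splits)
      next
        fix j assume "j \<notin> {..<r}"
        then show "f j = undefined" using h by auto
      qed
      have fi: "f i = a" using PiE_mem[OF h, of i] i by simp
      have fo: "\<And>j. j < r \<Longrightarrow> j \<noteq> i \<Longrightarrow> f j + 1 \<noteq> b"
        using PiE_mem[OF h] b by fastforce
      show "f \<in> {f\<in>FF r k. f i = a \<and> (\<forall>j<r. j \<noteq> i \<longrightarrow> ?c (j * k + f j) \<noteq> ?c v)}"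
        using f fi fo val by simp
    qed
  qed
  moreover have "card ({..<k} - {b - 1}) = k - 1" using b by auto
  ultimately show ?thesis
    using util_G[OF r k v, of ?c] card_PiE_pt[OF i, of "{..<k} - {b - 1}" a] i_def a_def by simp
qed

lemma cN_col: "k \<ge> 1 \<Longrightarrow> cN r k \<in> colorings (VG r k) k"
  unfolding cN_def colorings_def by (auto simp: Suc_le_eq)

lemma cO_col: "k \<ge> 1 \<Longrightarrow> cO r k \<in> colorings (VG r k) k"
  unfolding cO_def colorings_def by auto

lemma cN_NE:
  assumes r: "r \<ge> 1" and k: "k \<ge> 1"
  shows "nash_eq (VG r k) (EG r k) k (cN r k)"
  unfolding nash_eq_def
proof (intro conjI ballI)
  show "cN r k \<in> colorings (VG r k) k" using cN_col[OF k] .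
  fix v b assume v: "v \<in> VG r k" and b: "b \<in> {1..k}"
  have cv: "cN r k v \<in> {1..k}" using col_range[OF cN_col[OF k] v] .
  have "util (EG r k) v (cN r k) = util (EG r k) v ((cN r k)(v := cN r k v))" by simp
  then show "util (EG r k) v ((cN r k)(v := b)) \<le> util (EG r k) v (cN r k)"
    using utilN[OF r k v b] utilN[OF r k v cv] by simp
qed

lemma SW_cN:
  assumes r: "r \<ge> 1" and k: "k \<ge> 1"
  shows "SW (VG r k) (EG r k) (cN r k) = r * k * (k - 1) ^ (r - 1)"
proof -
  have "\<And>v. v \<in> VG r k \<Longrightarrow> util (EG r k) v (cN r k) = (k - 1) ^ (r - 1)"
  proof -
    fix v assume v: "v \<in> VG r k"
    have cv: "cN r k v \<in> {1..k}" using col_range[OF cN_col[OF k] v] .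
    show "util (EG r k) v (cN r k) = (k - 1) ^ (r - 1)" using utilN[OF r k v cv] by simp
  qed
  then show ?thesis unfolding SW_def VG_def by simp
qed

lemma utilO:
  assumes r: "r \<ge> 1" and k: "k \<ge> 1" and v: "v \<in> VG r k" and g: "v div k + 1 < k \<or> r \<le> k"
  shows "util (EG r k) v (cO r k) = k ^ (r - 1)"
proof -
  define i where "i = v div k"
  define a where "a = v mod k"
  have i: "i < r" using v unfolding VG_def i_def by (simp add: less_mult_imp_div_less)
  have a: "a < k" using k unfolding a_def by simp
  have cv: "cO r k v = min (i + 1) k" unfolding cO_def i_def using v by simp
  have val: "cO r k (j * k + f j) \<noteq> cO r k v" if f: "f \<in> FF r k" and j: "j < r" "j \<noteq> i" for f j
  proof -
    have fj: "f j < k" using FF_lt[OF f j(1)] .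
    have "(j * k + f j) div k = j" using fj by simp
    then have "cO r k (j * k + f j) = min (j + 1) k" unfolding cO_def using pos_VG[OF f j(1)] by simp
    then show ?thesis using cv g j i i_def by auto
  qed
  have "{f\<in>FF r k. f i = a \<and> (\<forall>j<r. j \<noteq> i \<longrightarrow> cO r k (j * k + f j) \<noteq> cO r k v)}
       = PiE {..<r} (\<lambda>j. if j = i then {a} else {..<k})"
  proof (rule set_eqI)
    fix f
    show "f \<in> {f\<in>FF r k. f i = a \<and> (\<forall>j<r. j \<noteq> i \<longrightarrow> cO r k (j * k + f j) \<noteq> cO r k v)} \<longleftrightarrow>
          f \<in> PiE {..<r} (\<lambda>j. if j = i then {a} else {..<k})"
    proof
      assume h: "f \<in> {f\<in>FF r k. f i = a \<and> (\<forall>j<r. j \<noteq> i \<longrightarrow> cO r k (j * k + f j) \<noteq> cO r k v)}"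
      then have f: "f \<in> FF r k" and fi: "f i = a" by auto
      have ext: "f \<in> extensional {..<r}" using f unfolding FF_def by (simp add: PiE_def)
      show "f \<in> PiE {..<r} (\<lambda>j. if j = i then {a} else {..<k})"
      proof (rule PiE_I)
        fix j assume "j \<in> {..<r}"
        then show "f j \<in> (if j = i then {a} else {..<k})"
          using fi FF_lt[OF f, of j] by auto
      next
        fix j assume "j \<notin> {..<r}"
        then show "f j = undefined" using ext by (simp add: extensional_def)
      qed
    next
      assume h: "f \<in> PiE {..<r} (\<lambda>j. if j = i then {a} else {..<k})"
      have f: "f \<in> FF r k" unfolding FF_def
      proof (rule PiE_I)
        fix j assume j: "j \<in> {..<r}"
        show "f j \<in> {..<k}" using PiE_mem[OF h j] a by (auto split: if_splits)
      next
        fix j assume "j \<notin> {..<r}"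
        then show "f j = undefined" using h by auto
      qed
      have fi: "f i = a" using PiE_mem[OF h, of i] i by simp
      show "f \<in> {f\<in>FF r k. f i = a \<and> (\<forall>j<r. j \<noteq> i \<longrightarrow> cO r k (j * k + f j) \<noteq> cO r k v)}"
        using f fi val by simp
    qed
  qed
  then show ?thesis
    using util_G[OF r k v, of "cO r k"] card_PiE_pt[OF i, of "{..<k}" a] i_def a_def by simp
qed

lemma SW_cO:
  assumes r: "r \<ge> 1" and k: "k \<ge> 1"
  defines "g \<equiv> (if r \<le> k then r else k - 1)"
  shows "g * k ^ r \<le> SW (VG r k) (EG r k) (cO r k)"
proof -
  have gr: "g \<le> r" unfolding g_def by auto
  have sub: "{..<g * k} \<subseteq> VG r k" unfolding VG_def using gr by (auto intro: less_le_trans mult_right_mono)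
  have "(\<Sum>v\<in>{..<g * k}. util (EG r k) v (cO r k)) = (\<Sum>v\<in>{..<g * k}. k ^ (r - 1))"
  proof (rule sum.cong[OF refl])
    fix v assume v: "v \<in> {..<g * k}"
    then have vd: "v div k < g" by (simp add: less_mult_imp_div_less)
    have "v div k + 1 < k \<or> r \<le> k" using vd unfolding g_def by (auto split: if_splits)
    then show "util (EG r k) v (cO r k) = k ^ (r - 1)" using utilO[OF r k] sub v by blast
  qed
  also have "\<dots> = g * k ^ r" using r by (cases r) auto
  finally have A: "(\<Sum>v\<in>{..<g * k}. util (EG r k) v (cO r k)) = g * k ^ r" .
  have "(\<Sum>v\<in>{..<g * k}. util (EG r k) v (cO r k)) \<le> (\<Sum>v\<in>VG r k. util (EG r k) v (cO r k))"
    by (rule sum_mono2) (use sub in \<open>auto simp: VG_def\<close>)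
  then show ?thesis using A unfolding SW_def by simp
qed




lemma OPT_ge:
  assumes H: "hypergraph V E" and c: "c \<in> colorings V k"
  shows "SW V E c \<le> OPT V E k"
proof -
  have fV: "finite V" using H hypergraph_def by auto
  show ?thesis unfolding OPT_def using colorings_fin[OF fV] c by (intro Max_ge) auto
qed

lemma ratio_lower:
  assumes H: "hypergraph V E" and NE: "nash_eq V E k c" and c': "c' \<in> colorings V k"
  shows "ereal (real (SW V E c') / real (SW V E c)) \<le> ratio V E k"
proof -
  have O: "SW V E c' \<le> OPT V E k" using OPT_ge[OF H c'] .
  have N1: "NEW V E k \<le> ereal (real (SW V E c))" unfolding NEW_def
    by (rule INF_lower) (use NE in simp)
  have N0: "0 \<le> NEW V E k" unfolding NEW_def by (rule INF_greatest) simp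
  show ?thesis
  proof (cases "NEW V E k = 0")
    case True
    show ?thesis
    proof (cases "OPT V E k > 0")
      case True
      then show ?thesis unfolding ratio_def using \<open>NEW V E k = 0\<close> by simp
    next
      case False
      then have "SW V E c' = 0" using O by simp
      then show ?thesis unfolding ratio_def using \<open>NEW V E k = 0\<close> False by simp
    qed
  next
    case False
    then obtain y where y: "NEW V E k = ereal y" using N0 N1
      by (cases "NEW V E k") auto
    have y0: "y > 0" using y N0 False by (simp add: zero_ereal_def)
    have ys: "y \<le> real (SW V E c)" using y N1 by simp
    have "real (SW V E c') / real (SW V E c) \<le> real (OPT V E k) / real (SW V E c)"
      using O by (simp add: divide_right_mono)
    also have "\<dots> \<le> real (OPT V E k) / y" using y0 ys by (simp add: frac_le)
    finally show ?thesis unfolding ratio_def using False y y0 by simp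
  qed
qed

lemma PoA_ge: "(V, E) \<in> uniform_hypergraphs r \<Longrightarrow> ratio V E k \<le> PoA r k"
  unfolding PoA_def by (rule SUP_upper2[where i="(V, E)"]) auto

lemma case3:
  assumes r: "r \<ge> 2" and k: "k \<ge> 2" and kr: "2 * k \<le> r"
  shows "PoA r k = \<infinity>"
proof -
  define V where "V = {..<r}"
  define E where "E = {V}"
  have UH: "(V, E) \<in> uniform_hypergraphs r"
    unfolding uniform_hypergraphs_def hypergraph_def V_def E_def using r by (auto simp: lessThan_empty_iff)
  then have H: "hypergraph V E" unfolding uniform_hypergraphs_def by simp
  define c where "c = restrict (\<lambda>v. v mod k + 1) V"
  have cc: "c \<in> colorings V k" unfolding c_def colorings_def using k by (auto simp: Suc_le_eq)
  have u0: "util E v (c(v := b)) = 0" if v: "v \<in> V" and b: "b \<in> {1..k}" for v b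
  proof -
    have "b \<in> c ` (V - {v})"
    proof (cases "v = b - 1")
      case True
      have w: "b - 1 + k \<in> V - {v}" unfolding V_def using True b k kr by auto
      have m0: "(b - 1 + k) mod k = (b - 1) mod k" by (rule mod_add_self2)
      have "b - 1 < k" using b by auto
      then have m: "(b - 1 + k) mod k = b - 1" using m0 by simp
      have "c (b - 1 + k) = b" unfolding c_def using w b m by auto
      then show ?thesis using w by (metis imageI)
    next
      case False
      have w: "b - 1 \<in> V - {v}" unfolding V_def using False b k kr by auto
      have "c (b - 1) = b" unfolding c_def using w b by auto
      then show ?thesis using w by (metis imageI)
    qed
    then have "{e\<in>E. v \<in> e \<and> b \<notin> c ` (e - {v})} = {}" unfolding E_def by auto
    then show ?thesis using util_switch[OF H, of v c b] by (metis card.empty)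
  qed
  have NE: "nash_eq V E k c" unfolding nash_eq_def
  proof (intro conjI ballI)
    show "c \<in> colorings V k" using cc .
    fix v b assume v: "v \<in> V" and b: "b \<in> {1..k}"
    show "util E v (c(v := b)) \<le> util E v c" using u0[OF v b] by simp
  qed
  have SW0: "SW V E c = 0"
  proof -
    have "\<And>v. v \<in> V \<Longrightarrow> util E v c = 0"
    proof -
      fix v assume v: "v \<in> V"
      have "c v \<in> {1..k}" using col_range[OF cc v] .
      then show "util E v c = 0" using u0[OF v] by (metis fun_upd_triv)
    qed
    then show ?thesis unfolding SW_def by simp
  qed
  define c' where "c' = restrict (\<lambda>v. if v = 0 then 1 else (2::nat)) V"
  have cc': "c' \<in> colorings V k" unfolding c'_def colorings_def using k by auto
  have "0 \<in> V" unfolding V_def using r by simp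
  have "c' ` (V - {0}) \<subseteq> {2}" unfolding c'_def by auto
  then have "c' 0 \<notin> c' ` (V - {0})" unfolding c'_def using \<open>0 \<in> V\<close> by auto
  then have "{e\<in>E. 0 \<in> e \<and> c' 0 \<notin> c' ` (e - {0})} = E" unfolding E_def using \<open>0 \<in> V\<close> by auto
  then have "util E 0 c' = 1" using util_alt[OF H, of 0 c'] unfolding E_def by simp
  moreover have "util E 0 c' \<le> SW V E c'" unfolding SW_def
    using \<open>0 \<in> V\<close> by (intro member_le_sum) (auto simp: V_def)
  ultimately have "OPT V E k > 0" using OPT_ge[OF H cc'] by simp
  moreover have "NEW V E k = 0"
  proof -
    have "NEW V E k \<le> ereal (real (SW V E c))" unfolding NEW_def
      by (rule INF_lower) (use NE in simp)
    moreover have "0 \<le> NEW V E k" unfolding NEW_def by (rule INF_greatest) simp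
    ultimately show ?thesis using SW0 by (simp add: zero_ereal_def)
  qed
  ultimately have "ratio V E k = \<infinity>" unfolding ratio_def by simp
  then show ?thesis using PoA_ge[OF UH, of k] by simp
qed




lemma PoA_upper:
  assumes k: "k \<ge> 1" and r: "r \<ge> 1" and kr: "real r < 2 * real k"
  shows "PoA r k \<le> ereal (real (if r \<le> k then r else k - 1) * (2 * real k + real r - 2) / (real r * (2 * real k - real r)))"
  unfolding PoA_def
proof (rule SUP_least)
  fix H assume "H \<in> uniform_hypergraphs r"
  then show "ratio (fst H) (snd H) k \<le> ereal (real (if r \<le> k then r else k - 1) * (2 * real k + real r - 2) / (real r * (2 * real k - real r)))"
    using ratio_upper[OF _ _ k r kr] unfolding uniform_hypergraphs_def by auto
qed

lemma PoA_lower: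
  assumes r: "r \<ge> 1" and k: "k \<ge> 1"
  shows "ereal (real (if r \<le> k then r else k - 1) * real k ^ r / (real r * real k * (real k - 1) ^ (r - 1))) \<le> PoA r k"
proof -
  define g where "g = (if r \<le> k then r else k - 1)"
  have UH: "(VG r k, EG r k) \<in> uniform_hypergraphs r" using G_hyp[OF r k] .
  have H: "hypergraph (VG r k) (EG r k)" using UH unfolding uniform_hypergraphs_def by simp
  have L: "ereal (real (SW (VG r k) (EG r k) (cO r k)) / real (SW (VG r k) (EG r k) (cN r k))) \<le> PoA r k"
    using ratio_lower[OF H cN_NE[OF r k] cO_col[OF k]] PoA_ge[OF UH, of k] by (rule order_trans)
  have "real g * real k ^ r \<le> real (SW (VG r k) (EG r k) (cO r k))"
    using SW_cO[OF r k] unfolding g_def by (metis of_nat_le_iff of_nat_mult of_nat_power)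
  moreover have "real (SW (VG r k) (EG r k) (cN r k)) = real r * real k * (real k - 1) ^ (r - 1)"
    using SW_cN[OF r k] k by (simp add: of_nat_diff)
  ultimately have "real g * real k ^ r / (real r * real k * (real k - 1) ^ (r - 1))
      \<le> real (SW (VG r k) (EG r k) (cO r k)) / real (SW (VG r k) (EG r k) (cN r k))"
    using k by (simp add: divide_right_mono)
  then show ?thesis using L unfolding g_def by (meson ereal_less_eq(3) order_trans)
qed

theorem theorem2:
  fixes r k :: nat
  assumes "r \<ge> 2" and "k \<ge> 2"
  shows "(k \<ge> r \<longrightarrow>
            ereal ((real k / (real k - 1)) ^ (r - 1)) \<le> PoA r k \<and>
            PoA r k \<le> ereal ((2 * real k + real r - 2) / (2 * real k - real r)))
       \<and> (real r / 2 < real k \<and> k < r \<longrightarrow>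
            ereal ((real k - 1) / real r * (real k / (real k - 1)) ^ (r - 1)) \<le> PoA r k \<and>
            PoA r k \<le> ereal ((real k - 1) / real r * ((2 * real k + real r - 2) / (2 * real k - real r))))
       \<and> (real k \<le> real r / 2 \<longrightarrow> PoA r k = \<infinity>)"
proof (intro conjI impI)
  have r1: "r \<ge> 1" and k1: "k \<ge> 1" using assms by auto
  have K1: "real k - 1 > 0" using assms by simp
  have rr: "real k ^ r = real k * real k ^ (r - 1)" using r1 by (cases r) auto
  {
    assume kr: "r \<le> k"
    have "(real k / (real k - 1)) ^ (r - 1) = real r * real k ^ r / (real r * real k * (real k - 1) ^ (r - 1))"
      using K1 r1 k1 by (simp add: rr power_divide field_simps)
    then show "ereal ((real k / (real k - 1)) ^ (r - 1)) \<le> PoA r k"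
      using PoA_lower[OF r1 k1] kr by simp
    have "real r < 2 * real k" using kr k1 by simp
    then show "PoA r k \<le> ereal ((2 * real k + real r - 2) / (2 * real k - real r))"
      using PoA_upper[OF k1 r1] kr r1 by simp
  }
  {
    assume h: "real r / 2 < real k \<and> k < r"
    have "(real k - 1) / real r * (real k / (real k - 1)) ^ (r - 1)
         = real (k - 1) * real k ^ r / (real r * real k * (real k - 1) ^ (r - 1))"
      using K1 r1 k1 by (simp add: rr power_divide field_simps of_nat_diff)
    then show "ereal ((real k - 1) / real r * (real k / (real k - 1)) ^ (r - 1)) \<le> PoA r k"
      using PoA_lower[OF r1 k1] h by simp
    have kr: "real r < 2 * real k" using h by simp
    have "real (k - 1) * (2 * real k + real r - 2) / (real r * (2 * real k - real r))
        = (real k - 1) / real r * ((2 * real k + real r - 2) / (2 * real k - real r))"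
      using k1 by (simp add: of_nat_diff)
    then show "PoA r k \<le> ereal ((real k - 1) / real r * ((2 * real k + real r - 2) / (2 * real k - real r)))"
      using PoA_upper[OF k1 r1 kr] h by simp
  }
  {
    assume "real k \<le> real r / 2"
    then have "2 * k \<le> r" by simp
    then show "PoA r k = \<infinity>" using case3 assms by blast
  }
qed


end
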